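(* Let $R$ be a ring with identity and $a,b,c,p,q\in R$, and suppose there exist $p',q'\in R$ with $q'qb=b$ and $cpp'=c$. The following are equivalent: (i) $paq$ is $(b,c)$-invertible; (ii) $a$ is $(qb,cp)$-invertible. In this case, if $y$ is the $(b,c)$-inverse of $paq$ and $w$ is the $(qb,cp)$-inverse of $a$, then $w=qyp$.
   Context: For $\alpha,b,c\in R$, $\alpha$ is $(b,c)$-invertible if there is $y\in R$ with $y\in (bRy)\cap(yRc)$, $y\alpha b=b$ and $c\alpha y=c$, where $xR=\{xr:r\in R\}$ and $Rx=\{rx:r\in R\}$; such $y$ is unique and called the $(b,c)$-inverse of $\alpha$. *)

theory Defs
  imports Main
begin

definition is_bc_inverse :: "'r::ring_1 \<Rightarrow> 'r \<Rightarrow> 'r \<Rightarrow> 'r \<Rightarrow> bool" where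
  "is_bc_inverse a b c y \<longleftrightarrow>
     (\<exists>r. y = b * r * y) \<and> (\<exists>s. y = y * s * c) \<and> y * a * b = b \<and> c * a * y = c"

definition bc_invertible :: "'r::ring_1 \<Rightarrow> 'r \<Rightarrow> 'r \<Rightarrow> bool" where
  "bc_invertible a b c \<longleftrightarrow> (\<exists>y. is_bc_inverse a b c y)"

end

theory Submission
  imports Defs
begin

lemma bc_unique:
  fixes a b c u v :: "'r::ring_1"
  assumes "is_bc_inverse a b c u" "is_bc_inverse a b c v"
  shows "u = v"
proof -
  from assms(1) obtain s where s: "u = u * s * c" and ua: "u * a * b = b"
    unfolding is_bc_inverse_def by blast
  from assms(2) obtain r where r: "v = b * r * v" and va: "c * a * v = c"
    unfolding is_bc_inverse_def by blast
  have "u = u * s * (c * a * v)" using s va by simp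
  also have "\<dots> = (u * s * c) * a * v" by (simp add: mult.assoc)
  finally have 1: "u = u * a * v" using s by simp
  have "v = (u * a * b) * r * v" using r ua by simp
  also have "\<dots> = u * a * (b * r * v)" by (simp add: mult.assoc)
  finally have "v = u * a * v" using r by simp
  with 1 show ?thesis by simp
qed

lemma fwd:
  fixes a b c p q y :: "'r::ring_1"
  assumes "c * p * p' = c" and "is_bc_inverse (p * a * q) b c y"
  shows "is_bc_inverse a (q * b) (c * p) (q * y * p)"
proof -
  from assms(2) obtain r s where r: "y = b * r * y" and s: "y = y * s * c"
    and yb: "y * (p * a * q) * b = b" and cy: "c * (p * a * q) * y = c"
    unfolding is_bc_inverse_def by blast
  have y1: "y = y * s * c * p * a * q * y"
    using s cy by (metis mult.assoc)
  have e1: "y * s * c * p * a * q * y = y" using y1 by simp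
  have "q * b * (r * y * s * c * p * a) * (q * y * p) = q * b * r * (y * s * c * p * a * q * y) * p"
    by (simp add: mult.assoc)
  also have "\<dots> = q * b * r * y * p" using e1 by simp
  also have "\<dots> = q * y * p" using r by (metis mult.assoc)
  finally have A: "q * y * p = q * b * (r * y * s * c * p * a) * (q * y * p)" by simp
  have y2: "y = y * p * a * q * b * r * y" using r yb by (metis mult.assoc)
  have e2: "y * p * a * q * b * r * y = y" using y2 by simp
  have "q * y * p * (a * q * b * r * y * s) * (c * p) = q * (y * p * a * q * b * r * y) * s * c * p"
    by (simp add: mult.assoc)
  also have "\<dots> = q * y * s * c * p" using e2 by simp
  also have "\<dots> = q * y * p" using s by (metis mult.assoc)
  finally have B: "q * y * p = q * y * p * (a * q * b * r * y * s) * (c * p)" by simp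
  have C: "q * y * p * a * (q * b) = q * b"
    using yb by (metis mult.assoc)
  have D: "c * p * a * (q * y * p) = c * p"
    using cy by (metis mult.assoc)
  show ?thesis unfolding is_bc_inverse_def using A B C D by blast
qed

lemma bwd:
  fixes a b c p q w :: "'r::ring_1"
  assumes "q' * q * b = b" and "c * p * p' = c" and "is_bc_inverse a (q * b) (c * p) w"
  shows "is_bc_inverse (p * a * q) b c (q' * w * p')"
proof -
  from assms(3) obtain r s where r: "w = q * b * r * w" and s: "w = w * s * (c * p)"
    and wb: "w * a * (q * b) = q * b" and cw: "c * p * a * w = c * p"
    unfolding is_bc_inverse_def by blast
  have qw: "q * q' * w = w"
  proof -
    have "q * q' * w = q * (q' * q * b) * r * w" using r by (metis mult.assoc)
    also have "\<dots> = q * b * r * w" using assms(1) by simp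
    finally show ?thesis using r by simp
  qed
  have wp: "w * p' * p = w"
  proof -
    have "w * p' * p = w * s * (c * p * p') * p" using s by (metis mult.assoc)
    also have "\<dots> = w * s * c * p" using assms(2) by (simp add: mult.assoc)
    finally show ?thesis using s by (metis mult.assoc)
  qed
  have A: "q' * w * p' * (p * a * q) * b = b"
  proof -
    have "q' * w * p' * (p * a * q) * b = q' * (w * p' * p) * a * (q * b)"
      by (simp add: mult.assoc)
    also have "\<dots> = q' * (w * a * (q * b))" using wp by (simp add: mult.assoc)
    also have "\<dots> = b" using wb assms(1) by (simp add: mult.assoc)
    finally show ?thesis .
  qed
  have B: "c * (p * a * q) * (q' * w * p') = c"
  proof -
    have "c * (p * a * q) * (q' * w * p') = c * p * a * (q * q' * w) * p'"
      by (simp add: mult.assoc)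
    also have "\<dots> = c * p * p'" using qw cw by simp
    finally show ?thesis using assms(2) by simp
  qed
  have C: "q' * w * p' = b * (r * q) * (q' * w * p')"
  proof -
    have "q' * w * p' = q' * q * b * r * (q * q' * w) * p'" using r qw by (metis mult.assoc)
    also have "\<dots> = b * r * q * q' * w * p'" using assms(1) by (simp add: mult.assoc)
    finally show ?thesis by (simp add: mult.assoc)
  qed
  have D: "q' * w * p' = (q' * w * p') * (p * s) * c"
  proof -
    have e: "w * s * c * p = w" using s by (simp add: mult.assoc)
    have e3: "c * (p * p') = c" using assms(2) by (simp add: mult.assoc)
    have "(q' * w * p') * (p * s) * c = q' * (w * p' * p) * s * c" by (simp add: mult.assoc)
    also have "\<dots> = q' * w * s * c" using wp by simp
    also have "\<dots> = q' * (w * s * c * p) * p'" using e3 by (simp add: mult.assoc)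
    also have "\<dots> = q' * w * p'" using e by simp
    finally show ?thesis by simp
  qed
  show ?thesis unfolding is_bc_inverse_def using A B C D by blast
qed

theorem corollary3p5:
  fixes a b c p q p' q' :: "'r::ring_1"
  assumes "q' * q * b = b" and "c * p * p' = c"
  shows "(bc_invertible (p * a * q) b c \<longleftrightarrow> bc_invertible a (q * b) (c * p))
    \<and> (\<forall>y w. is_bc_inverse (p * a * q) b c y \<longrightarrow> is_bc_inverse a (q * b) (c * p) w
         \<longrightarrow> w = q * y * p)"
  using fwd[OF assms(2)] bwd[OF assms] bc_unique
  unfolding bc_invertible_def by metis

end
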